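(* Let $N, N_y, M, p \in \mathbb{N}$ with $p\le N$, $X \in \mathbb{R}^{N \times M}$, $Y \in \mathbb{R}^{N_y \times M}$, $\lambda \ge 0$, $\Omega=\{1,\dots,N\}$, and let $\bar s_1,\dots,\bar s_p$ and $\bar S_0\subset\cdots\subset\bar S_p$ be a greedy sequence as defined in the context. Define recursively for $k=1,\dots,p$, starting from empty matrices $\Xi^{(0)}\in\mathbb{R}^{N\times 0}$, $\Theta^{(0)}\in\mathbb{R}^{N_y\times 0}$ (with the conventions $\Xi^{(0)}(\Xi^{(0)}_{\bar s_1})^\top = 0$, $\Theta^{(0)}(\Xi^{(0)}_{\bar s_1})^\top=0$, $[\Xi^{(0)},\xi^{(1)}]=\xi^{(1)}$, $[\Theta^{(0)},\theta^{(1)}]=\theta^{(1)}$): \begin{align*} \delta^{(k)} &= X X_{\bar s_k}^\top + \lambda (I_N)_{\bar s_k}^\top - \Xi^{(k-1)}(\Xi^{(k-1)}_{\bar s_k})^\top \in\mathbb{R}^N,\\ \xi^{(k)} &= \delta^{(k)}/\sqrt{\delta^{(k)}_{\bar s_k}},\qquad \theta^{(k)} = \bigl(Y X_{\bar s_k}^\top - \Theta^{(k-1)}(\Xi^{(k-1)}_{\bar s_k})^\top\bigr)/\sqrt{\delta^{(k)}_{\bar s_k}},\\ \Xi^{(k)} &= [\Xi^{(k-1)}, \xi^{(k)}]\in\mathbb{R}^{N\times k},\qquad \Theta^{(k)} = [\Theta^{(k-1)},\theta^{(k)}]\in\mathbb{R}^{N_y\times k}. \end{align*} Then for every $k\in\{1,\dots,p\}$: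 \begin{align*} \xi^{(k)} &= (Q^{xx}_{\bar s_k}(\bar S_{k-1}))^\top (Q^{xx}_{\bar s_k,\bar s_k}(\bar S_{k-1}))^{-1/2},\\ \theta^{(k)} &= (Q^{xy}_{\bar s_k}(\bar S_{k-1}))^\top (Q^{xx}_{\bar s_k,\bar s_k}(\bar S_{k-1}))^{-1/2},\\ Q^{xx}(\bar S_k) &= Q^{xx}(\bar S_{k-1}) - \xi^{(k)}\xi^{(k)\top} = XX^\top + \lambda I_N - \Xi^{(k)}\Xi^{(k)\top},\\ Q^{xy}(\bar S_k) &= Q^{xy}(\bar S_{k-1}) - \xi^{(k)}\theta^{(k)\top} = XY^\top - \Xi^{(k)}\Theta^{(k)\top}. \end{align*}
   Context: Notation: for a matrix $A$ and an ordered index set $S$, $A_S$ is the submatrix of rows indexed by $S$, $A_{S,S}$ the principal submatrix indexed by $S$; $A_i$ is row $i$ of $A$ (a row vector), $A_{i,i}$ its $(i,i)$ entry; $v_i$ is the $i$th component of a vector $v$; $(I_N)_{s}^\top$ is the $s$th canonical unit vector. $P^{xx} = XX^\top + \lambda I_N$, $P^{xy} = XY^\top$. $Q^{xx}(\emptyset)=P^{xx}$, $Q^{xy}(\emptyset)=P^{xy}$, and for $|S|\ge1$ with $P^{xx}_{S,S}\succ0$: $Q^{xx}(S) = P^{xx} - (P^{xx}_S)^\top (P^{xx}_{S,S})^{-1} P^{xx}_S$, $Q^{xy}(S) = P^{xy} - (P^{xx}_S)^\top (P^{xx}_{S,S})^{-1} P^{xy}_S$. $J(S) = \operatorname{tr}\{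 Y X_S^\top (X_S X_S^\top + \lambda I_{|S|})^{-1} X_S Y^\top \}$ for feasible $S$, $J(\emptyset)=0$. Greedy sequence: $\bar S_0=\emptyset$; for $k=1,\dots,p$, $\mathcal{I}_k = \{ i\in\Omega\setminus\bar S_{k-1} : P^{xx}_{S',S'}\succ0,\ S'=\bar S_{k-1}\cup\{i\}\}$ (assumed nonempty), $\bar s_k \in \arg\max_{i\in\mathcal{I}_k}\{J(\bar S_{k-1}\cup\{i\}) - J(\bar S_{k-1})\}$, $\bar S_k = \bar S_{k-1}\cup\{\bar s_k\}$. *)

theory Defs
  imports "Jordan_Normal_Form.Matrix"
begin

(* Indices are 0-based: Omega = {0..<N}.  Ordered index sets are lists. *)

definition rowsub :: "real mat \<Rightarrow> nat list \<Rightarrow> real mat" where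
  "rowsub A S = mat (length S) (dim_col A) (\<lambda>(i,j). A $$ (S ! i, j))"

definition prinsub :: "real mat \<Rightarrow> nat list \<Rightarrow> real mat" where
  "prinsub A S = mat (length S) (length S) (\<lambda>(i,j). A $$ (S ! i, S ! j))"

definition posdef :: "real mat \<Rightarrow> bool" where
  "posdef A \<longleftrightarrow> A \<in> carrier_mat (dim_row A) (dim_row A) \<and> transpose_mat A = A \<and>
     (\<forall>v \<in> carrier_vec (dim_row A). v \<noteq> 0\<^sub>v (dim_row A) \<longrightarrow> v \<bullet> (A *\<^sub>v v) > 0)"

definition minv :: "real mat \<Rightarrow> real mat" where
  "minv A = (THE B. B \<in> carrier_mat (dim_row A) (dim_row A) \<and>
                    A * B = 1\<^sub>m (dim_row A) \<and> B * A = 1\<^sub>m (dim_row A))"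

definition mtrace :: "real mat \<Rightarrow> real" where
  "mtrace A = (\<Sum>i<dim_row A. A $$ (i,i))"

definition outer :: "real vec \<Rightarrow> real vec \<Rightarrow> real mat" where
  "outer u v = mat (dim_vec u) (dim_vec v) (\<lambda>(i,j). u $ i * v $ j)"

definition append_col :: "real mat \<Rightarrow> real vec \<Rightarrow> real mat" where
  "append_col A v = mat (dim_row A) (Suc (dim_col A))
     (\<lambda>(i,j). if j < dim_col A then A $$ (i,j) else v $ i)"

definition Pxx :: "real mat \<Rightarrow> real \<Rightarrow> real mat" where
  "Pxx X lam = X * transpose_mat X + lam \<cdot>\<^sub>m 1\<^sub>m (dim_row X)"

definition Pxy :: "real mat \<Rightarrow> real mat \<Rightarrow> real mat" where
  "Pxy X Y = X * transpose_mat Y"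

definition Qxx :: "real mat \<Rightarrow> real \<Rightarrow> nat list \<Rightarrow> real mat" where
  "Qxx X lam S = (if S = [] then Pxx X lam else
     Pxx X lam - transpose_mat (rowsub (Pxx X lam) S) * minv (prinsub (Pxx X lam) S)
                   * rowsub (Pxx X lam) S)"

definition Qxy :: "real mat \<Rightarrow> real mat \<Rightarrow> real \<Rightarrow> nat list \<Rightarrow> real mat" where
  "Qxy X Y lam S = (if S = [] then Pxy X Y else
     Pxy X Y - transpose_mat (rowsub (Pxx X lam) S) * minv (prinsub (Pxx X lam) S)
                   * rowsub (Pxy X Y) S)"

definition Jval :: "real mat \<Rightarrow> real mat \<Rightarrow> real \<Rightarrow> nat list \<Rightarrow> real" where
  "Jval X Y lam S = (if S = [] then 0 else
     mtrace (Y * transpose_mat (rowsub X S)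
       * minv (rowsub X S * transpose_mat (rowsub X S) + lam \<cdot>\<^sub>m 1\<^sub>m (length S))
       * rowsub X S * transpose_mat Y))"

definition gset :: "(nat \<Rightarrow> nat) \<Rightarrow> nat \<Rightarrow> nat list" where
  "gset s k = map s [1..<Suc k]"

definition candidates :: "real mat \<Rightarrow> real \<Rightarrow> (nat \<Rightarrow> nat) \<Rightarrow> nat \<Rightarrow> nat set" where
  "candidates X lam s k = {i. i < dim_row X \<and> i \<notin> set (gset s (k - 1)) \<and>
       posdef (prinsub (Pxx X lam) (gset s (k - 1) @ [i]))}"

definition greedy_seq :: "real mat \<Rightarrow> real mat \<Rightarrow> real \<Rightarrow> nat \<Rightarrow> (nat \<Rightarrow> nat) \<Rightarrow> bool" where
  "greedy_seq X Y lam p s \<longleftrightarrow> (\<forall>k \<in> {1..p}.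
     candidates X lam s k \<noteq> {} \<and>
     s k \<in> candidates X lam s k \<and>
     (\<forall>i \<in> candidates X lam s k.
        Jval X Y lam (gset s (k - 1) @ [i]) - Jval X Y lam (gset s (k - 1))
        \<le> Jval X Y lam (gset s k) - Jval X Y lam (gset s (k - 1))))"

definition delta_vec :: "real mat \<Rightarrow> real \<Rightarrow> real mat \<Rightarrow> nat \<Rightarrow> real vec" where
  "delta_vec X lam Xi sk = X *\<^sub>v row X sk + lam \<cdot>\<^sub>v unit_vec (dim_row X) sk - Xi *\<^sub>v row Xi sk"

definition xi_vec :: "real mat \<Rightarrow> real \<Rightarrow> real mat \<Rightarrow> nat \<Rightarrow> real vec" where
  "xi_vec X lam Xi sk = (1 / sqrt (delta_vec X lam Xi sk $ sk)) \<cdot>\<^sub>v delta_vec X lam Xi sk"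

definition theta_vec :: "real mat \<Rightarrow> real mat \<Rightarrow> real \<Rightarrow> real mat \<Rightarrow> real mat \<Rightarrow> nat \<Rightarrow> real vec" where
  "theta_vec X Y lam Xi Th sk = (1 / sqrt (delta_vec X lam Xi sk $ sk))
      \<cdot>\<^sub>v (Y *\<^sub>v row X sk - Th *\<^sub>v row Xi sk)"

primrec XiTheta :: "real mat \<Rightarrow> real mat \<Rightarrow> real \<Rightarrow> (nat \<Rightarrow> nat) \<Rightarrow> nat \<Rightarrow> real mat \<times> real mat" where
  "XiTheta X Y lam s 0 = (0\<^sub>m (dim_row X) 0, 0\<^sub>m (dim_row Y) 0)"
| "XiTheta X Y lam s (Suc k) =
     (let Xi = fst (XiTheta X Y lam s k); Th = snd (XiTheta X Y lam s k) in
       (append_col Xi (xi_vec X lam Xi (s (Suc k))),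
        append_col Th (theta_vec X Y lam Xi Th (s (Suc k)))))"

end

theory Submission
  imports Defs "Jordan_Normal_Form.Determinant"
begin

lemma minv_props:
  assumes "posdef A"
  shows "minv A \<in> carrier_mat (dim_row A) (dim_row A) \<and> A * minv A = 1\<^sub>m (dim_row A)
         \<and> minv A * A = 1\<^sub>m (dim_row A)"
proof -
  let ?n = "dim_row A"
  have A: "A \<in> carrier_mat ?n ?n" using assms unfolding posdef_def by auto
  have "det A \<noteq> 0"
  proof
    assume "det A = 0"
    then obtain v where v: "v \<in> carrier_vec ?n" "v \<noteq> 0\<^sub>v ?n" "A *\<^sub>v v = 0\<^sub>v ?n"
      using det_0_iff_vec_prod_zero[OF A] by auto
    have "\<forall>v \<in> carrier_vec ?n. v \<noteq> 0\<^sub>v ?n \<longrightarrow> v \<bullet> (A *\<^sub>v v) > 0"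
      using assms unfolding posdef_def by blast
    then have "v \<bullet> (A *\<^sub>v v) > 0" using v(1,2) by blast
    moreover have "v \<bullet> (A *\<^sub>v v) = 0" using v(1) unfolding v(3) by (rule scalar_prod_right_zero)
    ultimately show False by simp
  qed
  from det_non_zero_imp_unit[OF A this, of undefined]
  obtain B where B: "B \<in> carrier_mat ?n ?n" "B * A = 1\<^sub>m ?n" "A * B = 1\<^sub>m ?n"
    unfolding Units_def ring_mat_def by auto
  have uniq: "C = B" if C: "C \<in> carrier_mat ?n ?n" "A * C = 1\<^sub>m ?n" "C * A = 1\<^sub>m ?n" for C
  proof -
    have "C = (B * A) * C" unfolding B(2) using C(1) by (rule left_mult_one_mat[symmetric])
    also have "\<dots> = B * (A * C)" using B(1) A C(1) by (rule assoc_mult_mat)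
    also have "\<dots> = B" unfolding C(2) using B(1) by (rule right_mult_one_mat)
    finally show ?thesis .
  qed
  have "minv A = B" unfolding minv_def
  proof (rule the_equality)
    show "B \<in> carrier_mat ?n ?n \<and> A * B = 1\<^sub>m ?n \<and> B * A = 1\<^sub>m ?n" using B by blast
  next
    fix C assume "C \<in> carrier_mat ?n ?n \<and> A * C = 1\<^sub>m ?n \<and> C * A = 1\<^sub>m ?n"
    then show "C = B" using uniq by blast
  qed
  then show ?thesis using B by blast
qed


definition good :: "real mat \<Rightarrow> nat list \<Rightarrow> real mat \<Rightarrow> real mat \<Rightarrow> bool" where
  "good P S B Z \<longleftrightarrow> Z \<in> carrier_mat (dim_row B) (dim_col B) \<and>
   (\<exists>C. \<forall>t<dim_row B. \<forall>l<dim_col B. Z $$ (t,l) = B $$ (t,l) - (\<Sum>a<length S. P $$ (S!a,t) * C a l)) \<and>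
   (\<forall>t\<in>set S. \<forall>l<dim_col B. Z $$ (t,l) = 0)"

definition symm :: "real mat \<Rightarrow> bool" where
  "symm P \<longleftrightarrow> (\<forall>i j. i < dim_row P \<longrightarrow> j < dim_row P \<longrightarrow> P $$ (i,j) = P $$ (j,i))"

lemma good_unique:
  assumes P: "P \<in> carrier_mat N N" and sy: "symm P" and SN: "set S \<subseteq> {..<N}"
    and BN: "dim_row B = N" and pd: "posdef (prinsub P S)"
    and g1: "good P S B Z1" and g2: "good P S B Z2"
  shows "Z1 = Z2"
proof -
  let ?m = "length S"
  obtain C1 where C1: "\<forall>t<dim_row B. \<forall>l<dim_col B. Z1 $$ (t,l) = B $$ (t,l) - (\<Sum>a<?m. P $$ (S!a,t) * C1 a l)"
    using g1 unfolding good_def by blast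
  obtain C2 where C2: "\<forall>t<dim_row B. \<forall>l<dim_col B. Z2 $$ (t,l) = B $$ (t,l) - (\<Sum>a<?m. P $$ (S!a,t) * C2 a l)"
    using g2 unfolding good_def by blast
  have eqC: "C1 a l = C2 a l" if l: "l < dim_col B" and a: "a < ?m" for a l
  proof -
    define v where "v = vec ?m (\<lambda>a. C1 a l - C2 a l)"
    have Sb: "S ! b < N" if "b < ?m" for b using SN that by (meson nth_mem subsetD lessThan_iff)
    have "prinsub P S *\<^sub>v v = 0\<^sub>v ?m"
    proof (rule eq_vecI)
      fix b assume b: "b < dim_vec (0\<^sub>v ?m)"
      then have b': "b < ?m" by simp
      have "(prinsub P S *\<^sub>v v) $ b = (\<Sum>a<?m. P $$ (S!a, S!b) * (C1 a l - C2 a l))"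
        using b' Sb sy P unfolding symm_def
        by (auto simp: lessThan_atLeast0 scalar_prod_def prinsub_def v_def intro!: sum.cong)
      also have "\<dots> = (\<Sum>a<?m. P $$ (S!a, S!b) * C1 a l) - (\<Sum>a<?m. P $$ (S!a, S!b) * C2 a l)"
        by (simp add: right_diff_distrib sum_subtractf)
      also have "\<dots> = 0"
      proof -
        have "Z1 $$ (S!b, l) = 0" "Z2 $$ (S!b, l) = 0" using g1 g2 b' l unfolding good_def by auto
        moreover have Sbd: "S!b < dim_row B" using Sb[OF b'] BN by simp
        moreover have "Z1 $$ (S!b,l) = B $$ (S!b,l) - (\<Sum>a<?m. P $$ (S!a,S!b) * C1 a l)"
          using C1 l Sbd by blast
        moreover have "Z2 $$ (S!b,l) = B $$ (S!b,l) - (\<Sum>a<?m. P $$ (S!a,S!b) * C2 a l)"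
          using C2 l Sbd by blast
        ultimately show ?thesis by linarith
      qed
      finally show "(prinsub P S *\<^sub>v v) $ b = 0\<^sub>v ?m $ b" using b' by simp
    qed (simp add: prinsub_def)
    moreover have "v \<in> carrier_vec ?m" unfolding v_def by simp
    moreover have "\<forall>v \<in> carrier_vec ?m. v \<noteq> 0\<^sub>v ?m \<longrightarrow> v \<bullet> (prinsub P S *\<^sub>v v) > 0"
      using pd unfolding posdef_def by (simp add: prinsub_def)
    ultimately have "v = 0\<^sub>v ?m" by force
    then have "v $ a = 0" using a by simp
    then show ?thesis using a unfolding v_def by simp
  qed
  show ?thesis
  proof (rule eq_matI)
    show "dim_row Z1 = dim_row Z2" "dim_col Z1 = dim_col Z2" using g1 g2 unfolding good_def by auto
    fix i j assume "i < dim_row Z2" "j < dim_col Z2"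
    then have ij: "i < dim_row B" "j < dim_col B" using g2 unfolding good_def by auto
    then have "Z1 $$ (i,j) = B $$ (i,j) - (\<Sum>a<?m. P $$ (S!a,i) * C1 a j)"
      "Z2 $$ (i,j) = B $$ (i,j) - (\<Sum>a<?m. P $$ (S!a,i) * C2 a j)" using C1 C2 by blast+
    moreover have "(\<Sum>a<?m. P $$ (S!a,i) * C1 a j) = (\<Sum>a<?m. P $$ (S!a,i) * C2 a j)"
      using eqC ij by (intro sum.cong) auto
    ultimately show "Z1 $$ (i,j) = Z2 $$ (i,j)" by simp
  qed
qed

lemma rowsub_carrier: "rowsub A S \<in> carrier_mat (length S) (dim_col A)"
  unfolding rowsub_def by simp

lemma prinsub_carrier: "prinsub A S \<in> carrier_mat (length S) (length S)"
  unfolding prinsub_def by simp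

lemma mult_entry:
  assumes "A \<in> carrier_mat m k" "B \<in> carrier_mat k n" "i < m" "j < n"
  shows "(A * B) $$ (i,j) = (\<Sum>a<k. A $$ (i,a) * B $$ (a,j))"
  using assms by (auto simp: scalar_prod_def lessThan_atLeast0 intro!: sum.cong)

lemma entry_TK:
  assumes P: "P \<in> carrier_mat N N" and K: "K \<in> carrier_mat (length S) n"
    and t: "t < N" and l: "l < n"
  shows "(transpose_mat (rowsub P S) * K) $$ (t,l) = (\<Sum>a<length S. P $$ (S!a,t) * K $$ (a,l))"
  using P K t l by (simp add: scalar_prod_def lessThan_atLeast0 rowsub_def)

lemma good_Q:
  assumes P: "P \<in> carrier_mat N N" and sy: "symm P" and SN: "set S \<subseteq> {..<N}"
    and pd: "posdef (prinsub P S)" and B: "B \<in> carrier_mat N n"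
  shows "good P S B (B - transpose_mat (rowsub P S) * minv (prinsub P S) * rowsub B S)"
proof -
  let ?m = "length S"
  let ?A = "prinsub P S"
  let ?M = "minv ?A"
  let ?T = "transpose_mat (rowsub P S)"
  let ?R = "rowsub B S"
  let ?K = "?M * ?R"
  have A: "?A \<in> carrier_mat ?m ?m" by (rule prinsub_carrier)
  have dA: "dim_row ?A = ?m" using A by simp
  have M: "?M \<in> carrier_mat ?m ?m" "?A * ?M = 1\<^sub>m ?m" using minv_props[OF pd] unfolding dA by auto
  have T: "?T \<in> carrier_mat N ?m" using rowsub_carrier[of P S] P by simp
  have R: "?R \<in> carrier_mat ?m n" using rowsub_carrier[of B S] B by simp
  have K: "?K \<in> carrier_mat ?m n" using M R by simp
  have eq: "?T * ?M * ?R = ?T * ?K" using T M(1) R by (rule assoc_mult_mat)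
  have TK: "?T * ?K \<in> carrier_mat N n" using T K by simp
  have ent: "(B - ?T * ?K) $$ (t,l) = B $$ (t,l) - (\<Sum>a<?m. P $$ (S!a,t) * ?K $$ (a,l))"
    if "t < N" "l < n" for t l
    using entry_TK[OF P K that] that carrier_matD[OF TK] by simp
  have zero: "(B - ?T * ?K) $$ (S!b,l) = 0" if b: "b < ?m" and l: "l < n" for b l
  proof -
    have Sb: "S!b < N" using SN b by (meson nth_mem subsetD lessThan_iff)
    have "(\<Sum>a<?m. P $$ (S!a,S!b) * ?K $$ (a,l)) = (\<Sum>a<?m. ?A $$ (b,a) * ?K $$ (a,l))"
    proof (rule sum.cong)
      fix a assume "a \<in> {..<?m}"
      then have a: "a < ?m" by simp
      have "S!a < N" using SN a by (meson nth_mem subsetD lessThan_iff)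
      then have "P $$ (S!a,S!b) = P $$ (S!b,S!a)" using sy Sb P unfolding symm_def by auto
      then show "P $$ (S!a,S!b) * ?K $$ (a,l) = ?A $$ (b,a) * ?K $$ (a,l)"
        using a b unfolding prinsub_def by simp
    qed simp
    also have "\<dots> = (?A * ?K) $$ (b,l)"
      using mult_entry[OF A K b l] by simp
    also have "?A * ?K = (?A * ?M) * ?R" using A M(1) R by (simp add: assoc_mult_mat)
    also have "\<dots> = ?R" using M(2) R by simp
    also have "?R $$ (b,l) = B $$ (S!b,l)" using b l B unfolding rowsub_def by simp
    finally show ?thesis using ent[OF Sb l] by simp
  qed
  show ?thesis unfolding good_def eq
  proof (intro conjI)
    show "B - ?T * ?K \<in> carrier_mat (dim_row B) (dim_col B)" using B minus_carrier_mat[OF TK] by simp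
    show "\<exists>C. \<forall>t<dim_row B. \<forall>l<dim_col B. (B - ?T * ?K) $$ (t,l) = B $$ (t,l) - (\<Sum>a<?m. P $$ (S!a,t) * C a l)"
      by (rule exI[of _ "\<lambda>a l. ?K $$ (a,l)"]) (use ent B in simp)
    show "\<forall>t\<in>set S. \<forall>l<dim_col B. (B - ?T * ?K) $$ (t,l) = 0"
      using zero B by (auto simp: in_set_conv_nth)
  qed
qed

lemma set_nth_lt: "set S \<subseteq> {..<N} \<Longrightarrow> a < length S \<Longrightarrow> S ! a < N"
  by (meson nth_mem subsetD lessThan_iff)

lemma good_pos:
  assumes P: "P \<in> carrier_mat N N" and sy: "symm P" and SN: "set S \<subseteq> {..<N}"
    and s: "s < N" and g: "good P S P Z" and pd: "posdef (prinsub P (S @ [s]))"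
  shows "Z $$ (s,s) > 0"
proof -
  let ?m = "length S"
  let ?S' = "S @ [s]"
  have dP: "dim_row P = N" "dim_col P = N" using P by auto
  obtain C where C: "\<forall>t<N. \<forall>l<N. Z $$ (t,l) = P $$ (t,l) - (\<Sum>a<?m. P $$ (S!a,t) * C a l)"
    using g unfolding good_def dP by blast
  have zS: "Z $$ (S!b, l) = 0" if "b < ?m" "l < N" for b l
    using g that unfolding good_def dP by auto
  define v where "v = vec (Suc ?m) (\<lambda>a. if a < ?m then - C a s else 1)"
  have S'N: "?S' ! b < N" if "b < Suc ?m" for b
    using that SN s by (cases "b < ?m") (auto simp: nth_append set_nth_lt)
  have symP: "P $$ (i,j) = P $$ (j,i)" if "i < N" "j < N" for i j
    using sy that dP unfolding symm_def by auto
  have w: "(prinsub P ?S' *\<^sub>v v) $ b = Z $$ (?S' ! b, s)" if b: "b < Suc ?m" for b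
  proof -
    let ?t = "?S' ! b"
    have t: "?t < N" using S'N b .
    have "(prinsub P ?S' *\<^sub>v v) $ b = (\<Sum>a<Suc ?m. P $$ (?t, ?S'!a) * v $ a)"
      using b unfolding prinsub_def v_def by (simp add: scalar_prod_def lessThan_atLeast0)
    also have "\<dots> = (\<Sum>a<?m. P $$ (?t, S!a) * (- C a s)) + P $$ (?t, s)"
      unfolding v_def by (simp add: nth_append)
    also have "(\<Sum>a<?m. P $$ (?t, S!a) * (- C a s)) = - (\<Sum>a<?m. P $$ (S!a, ?t) * C a s)"
      by (simp add: sum_negf[symmetric] symP[OF t set_nth_lt[OF SN]])
    finally show ?thesis using C t s by simp
  qed
  have dw: "dim_vec (prinsub P ?S' *\<^sub>v v) = Suc ?m" by (simp add: prinsub_def)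
  have "v \<bullet> (prinsub P ?S' *\<^sub>v v) = (\<Sum>b\<in>{0..<Suc ?m}. v $ b * (prinsub P ?S' *\<^sub>v v) $ b)"
    unfolding scalar_prod_def dw ..
  also have "\<dots> = (\<Sum>b\<in>{0..<Suc ?m}. v $ b * Z $$ (?S' ! b, s))"
    by (rule sum.cong) (simp_all add: w)
  also have "\<dots> = (\<Sum>b<?m. v $ b * Z $$ (S ! b, s)) + v $ ?m * Z $$ (s, s)"
    by (simp add: nth_append lessThan_atLeast0)
  also have "(\<Sum>b<?m. v $ b * Z $$ (S ! b, s)) = 0"
    using zS s by simp
  also have "v $ ?m = 1" unfolding v_def by simp
  finally have eq: "v \<bullet> (prinsub P ?S' *\<^sub>v v) = Z $$ (s,s)" by simp
  have vc: "v \<in> carrier_vec (Suc ?m)" unfolding v_def by simp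
  have vn: "v \<noteq> 0\<^sub>v (Suc ?m)"
  proof
    assume "v = 0\<^sub>v (Suc ?m)"
    then have "v $ ?m = 0" by simp
    then show False unfolding v_def by simp
  qed
  have "\<forall>v \<in> carrier_vec (Suc ?m). v \<noteq> 0\<^sub>v (Suc ?m) \<longrightarrow> v \<bullet> (prinsub P ?S' *\<^sub>v v) > 0"
    using pd unfolding posdef_def by (simp add: prinsub_def)
  then show ?thesis using vc vn eq by auto
qed

lemma good_step:
  assumes P: "P \<in> carrier_mat N N" and sy: "symm P" and SN: "set S \<subseteq> {..<N}"
    and s: "s < N" and gZ: "good P S P Z" and gW: "good P S B W" and dB: "dim_row B = N"
    and d: "Z $$ (s,s) \<noteq> 0"
  shows "good P (S @ [s]) B
           (mat N (dim_col B) (\<lambda>(t,l). W $$ (t,l) - Z $$ (t,s) * W $$ (s,l) / Z $$ (s,s)))"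
proof -
  let ?m = "length S"
  let ?S' = "S @ [s]"
  let ?n = "dim_col B"
  let ?d = "Z $$ (s,s)"
  let ?W' = "mat N ?n (\<lambda>(t,l). W $$ (t,l) - Z $$ (t,s) * W $$ (s,l) / ?d)"
  have dP: "dim_row P = N" "dim_col P = N" using P by auto
  obtain CZ where CZ: "\<forall>t<N. \<forall>l<N. Z $$ (t,l) = P $$ (t,l) - (\<Sum>a<?m. P $$ (S!a,t) * CZ a l)"
    using gZ unfolding good_def dP by blast
  obtain CW where CW: "\<forall>t<N. \<forall>l<?n. W $$ (t,l) = B $$ (t,l) - (\<Sum>a<?m. P $$ (S!a,t) * CW a l)"
    using gW unfolding good_def dB by blast
  have zZ: "Z $$ (t, l) = 0" if "t \<in> set S" "l < N" for t l
    using gZ that unfolding good_def dP by auto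
  have zW: "W $$ (t, l) = 0" if "t \<in> set S" "l < ?n" for t l
    using gW that unfolding good_def by auto
  have symP: "P $$ (i,j) = P $$ (j,i)" if "i < N" "j < N" for i j
    using sy that dP unfolding symm_def by auto
  define C' where "C' = (\<lambda>a l. if a < ?m then CW a l - CZ a s * (W $$ (s,l) / ?d) else W $$ (s,l) / ?d)"
  have ent: "?W' $$ (t,l) = B $$ (t,l) - (\<Sum>a<length ?S'. P $$ (?S'!a,t) * C' a l)"
    if t: "t < N" and l: "l < ?n" for t l
  proof -
    let ?q = "W $$ (s,l) / ?d"
    have "(\<Sum>a<length ?S'. P $$ (?S'!a,t) * C' a l)
        = (\<Sum>a<?m. P $$ (?S'!a,t) * C' a l) + P $$ (s,t) * ?q"
      by (simp add: C'_def)
    also have "(\<Sum>a<?m. P $$ (?S'!a,t) * C' a l)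
        = (\<Sum>a<?m. P $$ (S!a,t) * CW a l) - (\<Sum>a<?m. ?q * (P $$ (S!a,t) * CZ a s))"
      unfolding sum_subtractf[symmetric]
      by (rule sum.cong) (simp_all add: C'_def nth_append algebra_simps)
    also have "(\<Sum>a<?m. ?q * (P $$ (S!a,t) * CZ a s)) = ?q * (\<Sum>a<?m. P $$ (S!a,t) * CZ a s)"
      by (simp add: sum_distrib_left)
    finally have e: "(\<Sum>a<length ?S'. P $$ (?S'!a,t) * C' a l)
        = (\<Sum>a<?m. P $$ (S!a,t) * CW a l) - ?q * (\<Sum>a<?m. P $$ (S!a,t) * CZ a s) + P $$ (s,t) * ?q" .
    have e1: "(\<Sum>a<?m. P $$ (S!a,t) * CW a l) = B $$ (t,l) - W $$ (t,l)" using CW t l by simp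
    have e2: "(\<Sum>a<?m. P $$ (S!a,t) * CZ a s) = P $$ (t,s) - Z $$ (t,s)" using CZ t s by simp
    have e3: "P $$ (s,t) = P $$ (t,s)" using symP t s by simp
    have h: "?W' $$ (t,l) = W $$ (t,l) - Z $$ (t,s) * ?q" using t l by simp
    have alg: "\<And>(b::real) w z p q. w - z*q = b - ((b - w) - q*(p - z) + p*q)"
      by (simp add: algebra_simps)
    show ?thesis unfolding e e1 e2 e3 h by (rule alg)
  qed
  show ?thesis unfolding good_def
  proof (intro conjI)
    show "?W' \<in> carrier_mat (dim_row B) (dim_col B)" using dB by simp
    show "\<exists>C. \<forall>t<dim_row B. \<forall>l<dim_col B. ?W' $$ (t,l) = B $$ (t,l) - (\<Sum>a<length ?S'. P $$ (?S'!a,t) * C a l)"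
      using ent dB by blast
    show "\<forall>t\<in>set ?S'. \<forall>l<dim_col B. ?W' $$ (t,l) = 0"
    proof (intro ballI allI impI)
      fix t l assume t: "t \<in> set ?S'" and l: "l < ?n"
      have tN: "t < N" using t SN s by auto
      show "?W' $$ (t,l) = 0"
      proof (cases "t \<in> set S")
        case True
        then show ?thesis using tN l zZ[OF True s] zW[OF True l] by simp
      next
        case False
        then have "t = s" using t by simp
        then show ?thesis using tN l d by simp
      qed
    qed
  qed
qed

lemma mv_entry:
  assumes "A \<in> carrier_mat n k" "v \<in> carrier_vec k" "i < n"
  shows "(A *\<^sub>v v) $ i = (\<Sum>a<k. A $$ (i,a) * v $ a)"
  using assms by (auto simp: scalar_prod_def lessThan_atLeast0 intro!: sum.cong)

lemma powr_mhalf: "(d::real) > 0 \<Longrightarrow> d powr (-1/2) = 1 / sqrt d"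
proof -
  assume d: "d > 0"
  have e: "(-1/2::real) = - (1/2)" by linarith
  have "d powr (-1/2) = inverse (d powr (1/2))" unfolding e by (rule powr_minus)
  also have "d powr (1/2) = sqrt d" using d by (intro powr_half_sqrt) simp
  also have "inverse (sqrt d) = 1 / sqrt d" by (rule inverse_eq_divide)
  finally show ?thesis .
qed

lemma Pxx_carrier: "X \<in> carrier_mat N M \<Longrightarrow> Pxx X lam \<in> carrier_mat N N"
proof -
  assume X: "X \<in> carrier_mat N M"
  then have "dim_row X = N" by (rule carrier_matD)
  then show ?thesis unfolding Pxx_def by (metis add_carrier_mat one_carrier_mat smult_carrier_mat)
qed

lemma Pxy_carrier: "X \<in> carrier_mat N M \<Longrightarrow> Y \<in> carrier_mat Ny M \<Longrightarrow> Pxy X Y \<in> carrier_mat N Ny"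
  unfolding Pxy_def by (rule mult_carrier_mat, assumption, simp)

lemma Pxx_entry: assumes "X \<in> carrier_mat N M" "t < N" "l < N"
  shows "Pxx X lam $$ (t,l) = (\<Sum>m<M. X $$ (t,m) * X $$ (l,m)) + (if t = l then lam else 0)"
proof -
  have "(X * transpose_mat X) $$ (t,l) = (\<Sum>m<M. X $$ (t,m) * transpose_mat X $$ (m,l))"
    by (rule mult_entry) (use assms in auto)
  then show ?thesis using assms unfolding Pxx_def by auto
qed

lemma Pxy_entry: assumes "X \<in> carrier_mat N M" "Y \<in> carrier_mat Ny M" "t < N" "l < Ny"
  shows "Pxy X Y $$ (t,l) = (\<Sum>m<M. X $$ (t,m) * Y $$ (l,m))"
proof -
  have "(X * transpose_mat Y) $$ (t,l) = (\<Sum>m<M. X $$ (t,m) * transpose_mat Y $$ (m,l))"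
    by (rule mult_entry) (use assms in auto)
  then show ?thesis using assms unfolding Pxy_def by auto
qed

lemma Pxx_symm: assumes X: "X \<in> carrier_mat N M" shows "symm (Pxx X lam)"
  unfolding symm_def
proof (intro allI impI)
  fix i j assume "i < dim_row (Pxx X lam)" "j < dim_row (Pxx X lam)"
  then have ij: "i < N" "j < N" using Pxx_carrier[OF X, of lam] by auto
  have "(\<Sum>m<M. X $$ (i,m) * X $$ (j,m)) = (\<Sum>m<M. X $$ (j,m) * X $$ (i,m))"
    by (simp add: mult.commute)
  then show "Pxx X lam $$ (i, j) = Pxx X lam $$ (j, i)"
    unfolding Pxx_entry[OF X ij] Pxx_entry[OF X ij(2,1)] by simp
qed

lemma good_empty: "B \<in> carrier_mat N n \<Longrightarrow> good P [] B B"
  unfolding good_def by auto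

lemma Qxx_good:
  assumes X: "X \<in> carrier_mat N M" and SN: "set S \<subseteq> {..<N}" and pd: "posdef (prinsub (Pxx X lam) S)"
  shows "good (Pxx X lam) S (Pxx X lam) (Qxx X lam S)"
proof (cases "S = []")
  case True
  then show ?thesis unfolding Qxx_def using good_empty[OF Pxx_carrier[OF X]] by simp
next
  case False
  then show ?thesis unfolding Qxx_def
    using good_Q[OF Pxx_carrier[OF X] Pxx_symm[OF X] SN pd Pxx_carrier[OF X]] by simp
qed

lemma Qxy_good:
  assumes X: "X \<in> carrier_mat N M" and Y: "Y \<in> carrier_mat Ny M"
    and SN: "set S \<subseteq> {..<N}" and pd: "posdef (prinsub (Pxx X lam) S)"
  shows "good (Pxx X lam) S (Pxy X Y) (Qxy X Y lam S)"
proof (cases "S = []")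
  case True
  then show ?thesis unfolding Qxy_def using good_empty[OF Pxy_carrier[OF X Y]] by simp
next
  case False
  then show ?thesis unfolding Qxy_def
    using good_Q[OF Pxx_carrier[OF X] Pxx_symm[OF X] SN pd Pxy_carrier[OF X Y]] by simp
qed

lemma append_col_carrier: "A \<in> carrier_mat n j \<Longrightarrow> append_col A u \<in> carrier_mat n (Suc j)"
  unfolding append_col_def by (simp add: carrier_matD)

lemma append_col_entry: "A \<in> carrier_mat n j \<Longrightarrow> t < n \<Longrightarrow> a < Suc j \<Longrightarrow>
  append_col A u $$ (t,a) = (if a < j then A $$ (t,a) else u $ t)"
  unfolding append_col_def by (simp add: carrier_matD)

lemma ABt_entry:
  assumes A: "A \<in> carrier_mat n j" and B: "B \<in> carrier_mat n2 j" and t: "t < n" and l: "l < n2"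
  shows "(A * transpose_mat B) $$ (t,l) = (\<Sum>a<j. A $$ (t,a) * B $$ (l,a))"
proof -
  have Bt: "transpose_mat B \<in> carrier_mat j n2" using B by simp
  have "(A * transpose_mat B) $$ (t,l) = (\<Sum>a<j. A $$ (t,a) * transpose_mat B $$ (a,l))"
    by (rule mult_entry[OF A Bt t l])
  also have "\<dots> = (\<Sum>a<j. A $$ (t,a) * B $$ (l,a))"
    by (rule sum.cong) (use B l in simp_all)
  finally show ?thesis .
qed

lemma append_col_update:
  assumes Pm: "Pm \<in> carrier_mat n n2" and A: "A \<in> carrier_mat n j" and B: "B \<in> carrier_mat n2 j"
    and u: "dim_vec u = n" and v: "dim_vec v = n2"
  shows "(Pm - A * transpose_mat B) - outer u v = Pm - append_col A u * transpose_mat (append_col B v)"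
proof -
  have A': "append_col A u \<in> carrier_mat n (Suc j)" using A by (rule append_col_carrier)
  have B': "append_col B v \<in> carrier_mat n2 (Suc j)" using B by (rule append_col_carrier)
  have AB: "A * transpose_mat B \<in> carrier_mat n n2" using A B by simp
  have AB': "append_col A u * transpose_mat (append_col B v) \<in> carrier_mat n n2" using A' B' by simp
  have O: "outer u v \<in> carrier_mat n n2" unfolding outer_def using u v by simp
  show ?thesis
  proof (rule eq_matI)
    fix t l assume "t < dim_row (Pm - append_col A u * transpose_mat (append_col B v))"
      "l < dim_col (Pm - append_col A u * transpose_mat (append_col B v))"
    then have t: "t < n" and l: "l < n2" using AB' by auto
    have e1: "(append_col A u * transpose_mat (append_col B v)) $$ (t,l)
        = (\<Sum>a<Suc j. append_col A u $$ (t,a) * append_col B v $$ (l,a))"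
      by (rule ABt_entry[OF A' B' t l])
    also have "\<dots> = (\<Sum>a<j. A $$ (t,a) * B $$ (l,a)) + u $ t * v $ l"
      using append_col_entry[OF A t] append_col_entry[OF B l] by simp
    also have "(\<Sum>a<j. A $$ (t,a) * B $$ (l,a)) = (A * transpose_mat B) $$ (t,l)"
      by (rule ABt_entry[OF A B t l, symmetric])
    finally have e: "(append_col A u * transpose_mat (append_col B v)) $$ (t,l)
        = (A * transpose_mat B) $$ (t,l) + u $ t * v $ l" .
    have eo: "outer u v $$ (t,l) = u $ t * v $ l" unfolding outer_def using u v t l by simp
    have "((Pm - A * transpose_mat B) - outer u v) $$ (t,l)
        = (Pm $$ (t,l) - (A * transpose_mat B) $$ (t,l)) - outer u v $$ (t,l)"
      using carrier_matD[OF AB] carrier_matD[OF O] t l by simp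
    also have "\<dots> = Pm $$ (t,l) - (append_col A u * transpose_mat (append_col B v)) $$ (t,l)"
      unfolding e eo by simp
    also have "\<dots> = (Pm - append_col A u * transpose_mat (append_col B v)) $$ (t,l)"
      using carrier_matD[OF AB'] t l by simp
    finally show "((Pm - A * transpose_mat B) - outer u v) $$ (t,l)
        = (Pm - append_col A u * transpose_mat (append_col B v)) $$ (t,l)" .
  qed (use O AB' in auto)
qed

lemma step_main:
  assumes X: "X \<in> carrier_mat N M" and Y: "Y \<in> carrier_mat Ny M"
    and Xi: "Xi \<in> carrier_mat N j" and Th: "Th \<in> carrier_mat Ny j"
    and s: "s < N" and SN: "set S \<subseteq> {..<N}"
    and pS: "posdef (prinsub (Pxx X lam) S)" and pS': "posdef (prinsub (Pxx X lam) (S @ [s]))"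
    and QZ: "Qxx X lam S = Pxx X lam - Xi * transpose_mat Xi"
    and QW: "Qxy X Y lam S = Pxy X Y - Xi * transpose_mat Th"
  shows "xi_vec X lam Xi s = (Qxx X lam S $$ (s,s)) powr (-1/2) \<cdot>\<^sub>v row (Qxx X lam S) s
    \<and> theta_vec X Y lam Xi Th s = (Qxx X lam S $$ (s,s)) powr (-1/2) \<cdot>\<^sub>v row (Qxy X Y lam S) s
    \<and> Qxx X lam (S @ [s]) = Qxx X lam S - outer (xi_vec X lam Xi s) (xi_vec X lam Xi s)
    \<and> Qxx X lam (S @ [s]) = Pxx X lam - append_col Xi (xi_vec X lam Xi s)
          * transpose_mat (append_col Xi (xi_vec X lam Xi s))
    \<and> Qxy X Y lam (S @ [s]) = Qxy X Y lam S - outer (xi_vec X lam Xi s) (theta_vec X Y lam Xi Th s)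
    \<and> Qxy X Y lam (S @ [s]) = Pxy X Y - append_col Xi (xi_vec X lam Xi s)
          * transpose_mat (append_col Th (theta_vec X Y lam Xi Th s))"
proof -
  define P where "P = Pxx X lam"
  define PY where "PY = Pxy X Y"
  define Z where "Z = Qxx X lam S"
  define W where "W = Qxy X Y lam S"
  define xi where "xi = xi_vec X lam Xi s"
  define th where "th = theta_vec X Y lam Xi Th s"
  define d where "d = Z $$ (s,s)"
  have Pc: "P \<in> carrier_mat N N" unfolding P_def by (rule Pxx_carrier[OF X])
  have PYc: "PY \<in> carrier_mat N Ny" unfolding PY_def by (rule Pxy_carrier[OF X Y])
  have Psy: "symm P" unfolding P_def by (rule Pxx_symm[OF X])
  have XXc: "Xi * transpose_mat Xi \<in> carrier_mat N N" using Xi by simp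
  have XTc: "Xi * transpose_mat Th \<in> carrier_mat N Ny" using Xi Th by simp
  have Zc: "Z \<in> carrier_mat N N" unfolding Z_def QZ using minus_carrier_mat[OF XXc] .
  have Wc: "W \<in> carrier_mat N Ny" unfolding W_def QW using minus_carrier_mat[OF XTc] .
  have dX: "dim_row X = N" "dim_col X = M" using X by auto
  have dY: "dim_row Y = Ny" "dim_col Y = M" using Y by auto
  have dXi: "dim_row Xi = N" "dim_col Xi = j" using Xi by auto
  have dTh: "dim_row Th = Ny" "dim_col Th = j" using Th by auto
  have Zent: "Z $$ (t,l) = P $$ (t,l) - (\<Sum>a<j. Xi $$ (t,a) * Xi $$ (l,a))" if "t < N" "l < N" for t l
  proof -
    have "Z $$ (t,l) = P $$ (t,l) - (Xi * transpose_mat Xi) $$ (t,l)"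
      unfolding Z_def QZ P_def using carrier_matD[OF XXc] that by simp
    then show ?thesis using ABt_entry[OF Xi Xi that] by simp
  qed
  have Went: "W $$ (t,l) = PY $$ (t,l) - (\<Sum>a<j. Xi $$ (t,a) * Th $$ (l,a))" if "t < N" "l < Ny" for t l
  proof -
    have "W $$ (t,l) = PY $$ (t,l) - (Xi * transpose_mat Th) $$ (t,l)"
      unfolding W_def QW PY_def using carrier_matD[OF XTc] that by simp
    then show ?thesis using ABt_entry[OF Xi Th that] by simp
  qed
  have symZ: "Z $$ (t,l) = Z $$ (l,t)" if "t < N" "l < N" for t l
  proof -
    have "(\<Sum>a<j. Xi $$ (t,a) * Xi $$ (l,a)) = (\<Sum>a<j. Xi $$ (l,a) * Xi $$ (t,a))"
      by (simp add: mult.commute)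
    moreover have "P $$ (t,l) = P $$ (l,t)" using Psy that Pc unfolding symm_def by auto
    ultimately show ?thesis using Zent[OF that] Zent[OF that(2,1)] by simp
  qed
  have gZ: "good P S P Z" unfolding P_def Z_def by (rule Qxx_good[OF X SN pS])
  have gW: "good P S PY W" unfolding P_def W_def PY_def by (rule Qxy_good[OF X Y SN pS])
  have SN': "set (S @ [s]) \<subseteq> {..<N}" using SN s by auto
  have gZ': "good P (S @ [s]) P (Qxx X lam (S @ [s]))" unfolding P_def by (rule Qxx_good[OF X SN' pS'])
  have gW': "good P (S @ [s]) PY (Qxy X Y lam (S @ [s]))" unfolding P_def PY_def by (rule Qxy_good[OF X Y SN' pS'])
  have dpos: "d > 0" unfolding d_def by (rule good_pos[OF Pc Psy SN s gZ, folded P_def, OF pS'[folded P_def]])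
  have sq: "sqrt d * sqrt d = d" using dpos by simp
  have sqpos: "sqrt d > 0" using dpos by simp
  have delta: "delta_vec X lam Xi s = vec N (\<lambda>t. Z $$ (t,s))"
  proof (rule eq_vecI)
    show "dim_vec (delta_vec X lam Xi s) = dim_vec (vec N (\<lambda>t. Z $$ (t,s)))"
      unfolding delta_vec_def using dXi by simp
    fix t assume "t < dim_vec (vec N (\<lambda>t. Z $$ (t,s)))"
    then have t: "t < N" by simp
    have r1: "row X s \<in> carrier_vec M" using dX by (simp add: row_def)
    have r2: "row Xi s \<in> carrier_vec j" using dXi by (simp add: row_def)
    have e1: "(X *\<^sub>v row X s) $ t = (\<Sum>m<M. X $$ (t,m) * X $$ (s,m))"
      using mv_entry[OF X r1 t] s dX by simp
    have e2: "(Xi *\<^sub>v row Xi s) $ t = (\<Sum>a<j. Xi $$ (t,a) * Xi $$ (s,a))"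
      using mv_entry[OF Xi r2 t] s dXi by simp
    have e3: "(lam \<cdot>\<^sub>v unit_vec (dim_row X) s) $ t = (if t = s then lam else 0)"
      using t s dX by simp
    have "delta_vec X lam Xi s $ t = (X *\<^sub>v row X s) $ t + (lam \<cdot>\<^sub>v unit_vec (dim_row X) s) $ t
          - (Xi *\<^sub>v row Xi s) $ t"
      unfolding delta_vec_def using t dX dXi by simp
    also have "\<dots> = Z $$ (t,s)"
      unfolding e1 e2 e3 Zent[OF t s] P_def Pxx_entry[OF X t s] ..
    finally show "delta_vec X lam Xi s $ t = vec N (\<lambda>t. Z $$ (t,s)) $ t" using t by simp
  qed
  have ds: "delta_vec X lam Xi s $ s = d" unfolding delta d_def using s by simp
  have xi: "xi = vec N (\<lambda>t. Z $$ (t,s) / sqrt d)"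
    unfolding xi_def xi_vec_def ds unfolding delta by (rule eq_vecI) auto
  have thcore: "Y *\<^sub>v row X s - Th *\<^sub>v row Xi s = vec Ny (\<lambda>l. W $$ (s,l))"
  proof (rule eq_vecI)
    show "dim_vec (Y *\<^sub>v row X s - Th *\<^sub>v row Xi s) = dim_vec (vec Ny (\<lambda>l. W $$ (s,l)))"
      using dTh by simp
    fix l assume "l < dim_vec (vec Ny (\<lambda>l. W $$ (s,l)))"
    then have l: "l < Ny" by simp
    have r1: "row X s \<in> carrier_vec M" using dX by (simp add: row_def)
    have r2: "row Xi s \<in> carrier_vec j" using dXi by (simp add: row_def)
    have e1: "(Y *\<^sub>v row X s) $ l = (\<Sum>m<M. Y $$ (l,m) * X $$ (s,m))"
      using mv_entry[OF Y r1 l] s dX by simp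
    have e2: "(Th *\<^sub>v row Xi s) $ l = (\<Sum>a<j. Th $$ (l,a) * Xi $$ (s,a))"
      using mv_entry[OF Th r2 l] s dXi by simp
    have c1: "(\<Sum>m<M. Y $$ (l,m) * X $$ (s,m)) = (\<Sum>m<M. X $$ (s,m) * Y $$ (l,m))"
      by (simp add: mult.commute)
    have c2: "(\<Sum>a<j. Th $$ (l,a) * Xi $$ (s,a)) = (\<Sum>a<j. Xi $$ (s,a) * Th $$ (l,a))"
      by (simp add: mult.commute)
    have "(Y *\<^sub>v row X s - Th *\<^sub>v row Xi s) $ l = (Y *\<^sub>v row X s) $ l - (Th *\<^sub>v row Xi s) $ l"
      using l dTh by simp
    also have "\<dots> = W $$ (s,l)"
      unfolding e1 e2 c1 c2 Went[OF s l] PY_def Pxy_entry[OF X Y s l] ..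
    finally show "(Y *\<^sub>v row X s - Th *\<^sub>v row Xi s) $ l = vec Ny (\<lambda>l. W $$ (s,l)) $ l"
      using l by simp
  qed
  have th: "th = vec Ny (\<lambda>l. W $$ (s,l) / sqrt d)"
    unfolding th_def theta_vec_def ds thcore by (rule eq_vecI) auto
  have pw: "d powr (-1/2) = 1 / sqrt d" by (rule powr_mhalf[OF dpos])
  have C1: "xi = d powr (-1/2) \<cdot>\<^sub>v row Z s"
  proof (rule eq_vecI)
    show "dim_vec xi = dim_vec (d powr (-1/2) \<cdot>\<^sub>v row Z s)" unfolding xi using Zc by simp
    fix t assume "t < dim_vec (d powr (-1/2) \<cdot>\<^sub>v row Z s)"
    then have t: "t < N" using Zc by simp
    show "xi $ t = (d powr (-1/2) \<cdot>\<^sub>v row Z s) $ t"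
      unfolding xi pw using t s Zc symZ[OF t s] by simp
  qed
  have C2: "th = d powr (-1/2) \<cdot>\<^sub>v row W s"
  proof (rule eq_vecI)
    show "dim_vec th = dim_vec (d powr (-1/2) \<cdot>\<^sub>v row W s)" unfolding th using Wc by simp
    fix l assume "l < dim_vec (d powr (-1/2) \<cdot>\<^sub>v row W s)"
    then have l: "l < Ny" using Wc by simp
    show "th $ l = (d powr (-1/2) \<cdot>\<^sub>v row W s) $ l"
      unfolding th pw using l s Wc by simp
  qed
  have dne: "Z $$ (s,s) \<noteq> 0" using dpos unfolding d_def by simp
  have gZs: "good P (S @ [s]) P (mat N (dim_col P) (\<lambda>(t,l). Z $$ (t,l) - Z $$ (t,s) * Z $$ (s,l) / Z $$ (s,s)))"
    by (rule good_step[OF Pc Psy SN s gZ gZ _ dne]) (use Pc in simp)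
  have gWs: "good P (S @ [s]) PY (mat N (dim_col PY) (\<lambda>(t,l). W $$ (t,l) - Z $$ (t,s) * W $$ (s,l) / Z $$ (s,s)))"
    by (rule good_step[OF Pc Psy SN s gZ gW _ dne]) (use PYc in simp)
  have Q1: "Qxx X lam (S @ [s]) = mat N N (\<lambda>(t,l). Z $$ (t,l) - Z $$ (t,s) * Z $$ (s,l) / d)"
    using good_unique[OF Pc Psy SN' _ pS'[folded P_def] gZ' gZs] Pc unfolding d_def by simp
  have Q2: "Qxy X Y lam (S @ [s]) = mat N Ny (\<lambda>(t,l). W $$ (t,l) - Z $$ (t,s) * W $$ (s,l) / d)"
    using good_unique[OF Pc Psy SN' _ pS'[folded P_def] gW' gWs] Pc PYc unfolding d_def by simp
  have C3: "Qxx X lam (S @ [s]) = Z - outer xi xi"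
  proof (rule eq_matI)
    fix t l assume "t < dim_row (Z - outer xi xi)" "l < dim_col (Z - outer xi xi)"
    then have t: "t < N" and l: "l < N" unfolding xi outer_def by auto
    have "(Z - outer xi xi) $$ (t,l) = Z $$ (t,l) - (Z $$ (t,s) / sqrt d) * (Z $$ (l,s) / sqrt d)"
      unfolding xi outer_def using t l by simp
    also have "(Z $$ (t,s) / sqrt d) * (Z $$ (l,s) / sqrt d) = Z $$ (t,s) * Z $$ (s,l) / d"
      using symZ[OF l s] sq by (simp add: times_divide_times_eq)
    finally show "Qxx X lam (S @ [s]) $$ (t,l) = (Z - outer xi xi) $$ (t,l)"
      unfolding Q1 using t l by simp
  qed (unfold Q1 xi outer_def, auto)
  have C5: "Qxy X Y lam (S @ [s]) = W - outer xi th"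
  proof (rule eq_matI)
    fix t l assume "t < dim_row (W - outer xi th)" "l < dim_col (W - outer xi th)"
    then have t: "t < N" and l: "l < Ny" unfolding xi th outer_def by auto
    have "(W - outer xi th) $$ (t,l) = W $$ (t,l) - (Z $$ (t,s) / sqrt d) * (W $$ (s,l) / sqrt d)"
      unfolding xi th outer_def using t l by simp
    also have "(Z $$ (t,s) / sqrt d) * (W $$ (s,l) / sqrt d) = Z $$ (t,s) * W $$ (s,l) / d"
      using sq by (simp add: times_divide_times_eq)
    finally show "Qxy X Y lam (S @ [s]) $$ (t,l) = (W - outer xi th) $$ (t,l)"
      unfolding Q2 using t l by simp
  qed (unfold Q2 xi th outer_def, auto)
  have dxi: "dim_vec xi = N" unfolding xi by simp
  have dth: "dim_vec th = Ny" unfolding th by simp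
  have C4: "Z - outer xi xi = P - append_col Xi xi * transpose_mat (append_col Xi xi)"
    unfolding Z_def QZ P_def by (rule append_col_update[OF Pxx_carrier[OF X] Xi Xi dxi dxi])
  have C6: "W - outer xi th = PY - append_col Xi xi * transpose_mat (append_col Th th)"
    unfolding W_def QW PY_def by (rule append_col_update[OF Pxy_carrier[OF X Y] Xi Th dxi dth])
  show ?thesis
    using C1 C2 C3 C4 C5 C6 unfolding xi_def th_def Z_def W_def d_def P_def PY_def by simp
qed

lemma posdef_empty: "posdef (prinsub A [])"
  unfolding posdef_def
proof (intro conjI)
  show "prinsub A [] \<in> carrier_mat (dim_row (prinsub A [])) (dim_row (prinsub A []))"
    unfolding prinsub_def by simp
  show "transpose_mat (prinsub A []) = prinsub A []"
    by (rule eq_matI) (simp_all add: prinsub_def)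
  show "\<forall>v\<in>carrier_vec (dim_row (prinsub A [])). v \<noteq> 0\<^sub>v (dim_row (prinsub A [])) \<longrightarrow>
      0 < v \<bullet> (prinsub A [] *\<^sub>v v)"
  proof (intro ballI impI)
    fix v :: "real vec" assume v: "v \<in> carrier_vec (dim_row (prinsub A []))" and nz: "v \<noteq> 0\<^sub>v (dim_row (prinsub A []))"
    have "v = 0\<^sub>v (dim_row (prinsub A []))"
      by (rule eq_vecI) (use v in \<open>simp_all add: prinsub_def\<close>)
    with nz show "0 < v \<bullet> (prinsub A [] *\<^sub>v v)" by contradiction
  qed
qed

lemma minus_zero_prod: assumes A: "(A :: real mat) \<in> carrier_mat n n2"
  shows "A - 0\<^sub>m n 0 * transpose_mat (0\<^sub>m n2 0) = A"
proof (rule eq_matI)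
  fix i j assume "i < dim_row A" "j < dim_col A"
  then have ij: "i < n" "j < n2" using A by auto
  have z: "0\<^sub>m n 0 \<in> carrier_mat n 0" "0\<^sub>m n2 0 \<in> carrier_mat n2 0" by auto
  have "(0\<^sub>m n 0 * transpose_mat (0\<^sub>m n2 0)) $$ (i,j) = 0"
    using ABt_entry[OF z ij] by simp
  moreover have "0\<^sub>m n 0 * transpose_mat (0\<^sub>m n2 0) \<in> carrier_mat n n2" by simp
  ultimately show "(A - 0\<^sub>m n 0 * transpose_mat (0\<^sub>m n2 0)) $$ (i,j) = A $$ (i,j)"
    using ij by simp
qed (use A in auto)

lemma gset_Suc: "gset s (Suc j) = gset s j @ [s (Suc j)]"
  unfolding gset_def by simp

lemma gset_set: "set (gset s j) = s ` {1..j}"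
  unfolding gset_def by auto

lemma greedy_facts:
  assumes g: "greedy_seq X Y lam p s" and m: "m \<in> {1..p}"
  shows "s m < dim_row X \<and> posdef (prinsub (Pxx X lam) (gset s m))"
proof -
  have c: "s m \<in> candidates X lam s m" using g m unfolding greedy_seq_def by blast
  obtain j where j: "m = Suc j" using m by (cases m) auto
  show ?thesis using c unfolding candidates_def j gset_Suc by simp
qed

theorem lemma3:
  fixes X Y :: "real mat" and N Ny M p k :: nat and lam :: real and s :: "nat \<Rightarrow> nat"
  assumes "X \<in> carrier_mat N M" and "Y \<in> carrier_mat Ny M" and "p \<le> N" and "lam \<ge> 0"
    and "greedy_seq X Y lam p s"
    and "k \<in> {1..p}"
  shows "let Xi_k = fst (XiTheta X Y lam s k); Th_k = snd (XiTheta X Y lam s k);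
             xi = xi_vec X lam (fst (XiTheta X Y lam s (k - 1))) (s k);
             th = theta_vec X Y lam (fst (XiTheta X Y lam s (k - 1)))
                    (snd (XiTheta X Y lam s (k - 1))) (s k);
             Qx = Qxx X lam (gset s (k - 1)); Qy = Qxy X Y lam (gset s (k - 1))
         in xi = (Qx $$ (s k, s k)) powr (-1/2) \<cdot>\<^sub>v row Qx (s k)
          \<and> th = (Qx $$ (s k, s k)) powr (-1/2) \<cdot>\<^sub>v row Qy (s k)
          \<and> Qxx X lam (gset s k) = Qx - outer xi xi
          \<and> Qxx X lam (gset s k) = Pxx X lam - Xi_k * transpose_mat Xi_k
          \<and> Qxy X Y lam (gset s k) = Qy - outer xi th
          \<and> Qxy X Y lam (gset s k) = Pxy X Y - Xi_k * transpose_mat Th_k"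
proof -
  note X = assms(1) and Y = assms(2) and g = assms(5)
  have dX: "dim_row X = N" using X by auto
  have dY: "dim_row Y = Ny" using Y by auto
  have sN: "s m < N" if "m \<in> {1..p}" for m using greedy_facts[OF g that] dX by simp
  have pdm: "posdef (prinsub (Pxx X lam) (gset s m))" if "m \<le> p" for m
  proof (cases "m = 0")
    case True
    then show ?thesis unfolding gset_def by (simp add: posdef_empty)
  next
    case False
    then show ?thesis using greedy_facts[OF g] that by simp
  qed
  have SN: "set (gset s m) \<subseteq> {..<N}" if "m \<le> p" for m
    unfolding gset_set using sN that by auto
  define Inv where "Inv = (\<lambda>j. fst (XiTheta X Y lam s j) \<in> carrier_mat N j
     \<and> snd (XiTheta X Y lam s j) \<in> carrier_mat Ny j
     \<and> Qxx X lam (gset s j) = Pxx X lam - fst (XiTheta X Y lam s j) * transpose_mat (fst (XiTheta X Y lam s j))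
     \<and> Qxy X Y lam (gset s j) = Pxy X Y - fst (XiTheta X Y lam s j) * transpose_mat (snd (XiTheta X Y lam s j)))"
  have stepm: "Inv (Suc j) \<and> (let Xi_k = fst (XiTheta X Y lam s (Suc j)); Th_k = snd (XiTheta X Y lam s (Suc j));
             xi = xi_vec X lam (fst (XiTheta X Y lam s (Suc j - 1))) (s (Suc j));
             th = theta_vec X Y lam (fst (XiTheta X Y lam s (Suc j - 1)))
                    (snd (XiTheta X Y lam s (Suc j - 1))) (s (Suc j));
             Qx = Qxx X lam (gset s (Suc j - 1)); Qy = Qxy X Y lam (gset s (Suc j - 1))
         in xi = (Qx $$ (s (Suc j), s (Suc j))) powr (-1/2) \<cdot>\<^sub>v row Qx (s (Suc j))
          \<and> th = (Qx $$ (s (Suc j), s (Suc j))) powr (-1/2) \<cdot>\<^sub>v row Qy (s (Suc j))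
          \<and> Qxx X lam (gset s (Suc j)) = Qx - outer xi xi
          \<and> Qxx X lam (gset s (Suc j)) = Pxx X lam - Xi_k * transpose_mat Xi_k
          \<and> Qxy X Y lam (gset s (Suc j)) = Qy - outer xi th
          \<and> Qxy X Y lam (gset s (Suc j)) = Pxy X Y - Xi_k * transpose_mat Th_k)"
    if j: "Suc j \<le> p" and I: "Inv j" for j
  proof -
    define Xi where "Xi = fst (XiTheta X Y lam s j)"
    define Th where "Th = snd (XiTheta X Y lam s j)"
    have I': "Xi \<in> carrier_mat N j \<and> Th \<in> carrier_mat Ny j
      \<and> Qxx X lam (gset s j) = Pxx X lam - Xi * transpose_mat Xi
      \<and> Qxy X Y lam (gset s j) = Pxy X Y - Xi * transpose_mat Th"
      using I unfolding Xi_def Th_def by (simp add: Inv_def)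
    have Xic: "Xi \<in> carrier_mat N j" and Thc: "Th \<in> carrier_mat Ny j"
      and QZ: "Qxx X lam (gset s j) = Pxx X lam - Xi * transpose_mat Xi"
      and QW: "Qxy X Y lam (gset s j) = Pxy X Y - Xi * transpose_mat Th"
      using I' by blast+
    have s': "s (Suc j) < N" using sN j by simp
    have pS: "posdef (prinsub (Pxx X lam) (gset s j))" using pdm j by simp
    have pS': "posdef (prinsub (Pxx X lam) (gset s j @ [s (Suc j)]))" using pdm[OF j] unfolding gset_Suc .
    have SNj: "set (gset s j) \<subseteq> {..<N}" using SN j by simp
    have XT: "XiTheta X Y lam s (Suc j) = (append_col Xi (xi_vec X lam Xi (s (Suc j))),
        append_col Th (theta_vec X Y lam Xi Th (s (Suc j))))"
      unfolding Xi_def Th_def by (simp add: Let_def)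
    note R = step_main[OF X Y Xic Thc s' SNj pS pS' QZ QW]
    have "fst (XiTheta X Y lam s (Suc j)) \<in> carrier_mat N (Suc j)
     \<and> snd (XiTheta X Y lam s (Suc j)) \<in> carrier_mat Ny (Suc j)
     \<and> Qxx X lam (gset s (Suc j)) = Pxx X lam - fst (XiTheta X Y lam s (Suc j)) * transpose_mat (fst (XiTheta X Y lam s (Suc j)))
     \<and> Qxy X Y lam (gset s (Suc j)) = Pxy X Y - fst (XiTheta X Y lam s (Suc j)) * transpose_mat (snd (XiTheta X Y lam s (Suc j)))"
      unfolding XT fst_conv snd_conv gset_Suc
      using R append_col_carrier[OF Xic] append_col_carrier[OF Thc] by blast
    then have "Inv (Suc j)" by (simp only: Inv_def)
    moreover have "(let Xi_k = fst (XiTheta X Y lam s (Suc j)); Th_k = snd (XiTheta X Y lam s (Suc j));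
             xi = xi_vec X lam (fst (XiTheta X Y lam s (Suc j - 1))) (s (Suc j));
             th = theta_vec X Y lam (fst (XiTheta X Y lam s (Suc j - 1)))
                    (snd (XiTheta X Y lam s (Suc j - 1))) (s (Suc j));
             Qx = Qxx X lam (gset s (Suc j - 1)); Qy = Qxy X Y lam (gset s (Suc j - 1))
         in xi = (Qx $$ (s (Suc j), s (Suc j))) powr (-1/2) \<cdot>\<^sub>v row Qx (s (Suc j))
          \<and> th = (Qx $$ (s (Suc j), s (Suc j))) powr (-1/2) \<cdot>\<^sub>v row Qy (s (Suc j))
          \<and> Qxx X lam (gset s (Suc j)) = Qx - outer xi xi
          \<and> Qxx X lam (gset s (Suc j)) = Pxx X lam - Xi_k * transpose_mat Xi_k
          \<and> Qxy X Y lam (gset s (Suc j)) = Qy - outer xi th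
          \<and> Qxy X Y lam (gset s (Suc j)) = Pxy X Y - Xi_k * transpose_mat Th_k)"
      unfolding Let_def XT fst_conv snd_conv gset_Suc diff_Suc_1 Xi_def[symmetric] Th_def[symmetric]
      using R by blast
    ultimately show ?thesis by blast
  qed
  have invall: "Inv j" if "j \<le> p" for j
    using that
  proof (induction j)
    case 0
    have "XiTheta X Y lam s 0 = (0\<^sub>m N 0, 0\<^sub>m Ny 0)" using dX dY by simp
    then show ?case unfolding Inv_def gset_def
      using minus_zero_prod[OF Pxx_carrier[OF X, of lam]] minus_zero_prod[OF Pxy_carrier[OF X Y]]
      by (simp add: Qxx_def Qxy_def)
  next
    case (Suc j)
    then show ?case using stepm by simp
  qed
  obtain j where kj: "k = Suc j" using assms(6) by (cases k) auto
  have "Suc j \<le> p" using assms(6) kj by simp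
  then show ?thesis using stepm invall kj by simp
qed

end
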